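(* Let $k\ge 3$ and let $G=G_1\ast G_2\ast\dots\ast G_k$ be a free product of freely indecomposable groups such that $G_i$ is not infinite cyclic for $i\ge 3$. Let $p\colon G\to G_1\ast G_2$ be the projection that is the identity on $G_1$ and $G_2$ and trivial on $G_3,\dots,G_k$. Then $\ker(p)$ is invariant under every automorphism in $\mathrm{Aut}^0(G)$.
   Context: A group is freely indecomposable if non-trivial and not a free product of two non-trivial groups. For a free product $G=G_1\ast\dots\ast G_k$, $\mathrm{Aut}^0(G)$ is the subgroup of $\mathrm{Aut}(G)$ generated by: factor automorphisms (apply an automorphism of one factor $G_i$ and fix all other factors); transvections (if $G_i=\langle v\rangle$ is infinite cyclic and $w\in G_j$ with $j\ne i$, send $v\mapsto vw$ or $v\mapsto wv$ and fix all other factors); partial conjugations (for $i\neq j$ and $g\in G_j$, conjugate every element of $G_i$ by $g$ and fix all other factors). *)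

theory Defs
  imports "HOL-Algebra.Algebra"
begin

text \<open>Internal free products: a group G is the free product of the subgroups H i (i in I)
  if every element of G is the product of a unique reduced word, i.e. a list of
  non-identity letters from the factors with consecutive letters in distinct factors.\<close>

definition reduced_word :: "'a monoid \<Rightarrow> nat set \<Rightarrow> (nat \<Rightarrow> 'a set) \<Rightarrow> (nat \<times> 'a) list \<Rightarrow> bool" where
  "reduced_word G I H ws \<longleftrightarrow>
     (\<forall>(i, x) \<in> set ws. i \<in> I \<and> x \<in> H i \<and> x \<noteq> \<one>\<^bsub>G\<^esub>) \<and>
     (\<forall>j. Suc j < length ws \<longrightarrow> fst (ws ! j) \<noteq> fst (ws ! Suc j))"

definition word_prod :: "'a monoid \<Rightarrow> (nat \<times> 'a) list \<Rightarrow> 'a" where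
  "word_prod G ws = foldr (\<lambda>(i, x) acc. x \<otimes>\<^bsub>G\<^esub> acc) ws \<one>\<^bsub>G\<^esub>"

definition is_free_product :: "'a monoid \<Rightarrow> nat set \<Rightarrow> (nat \<Rightarrow> 'a set) \<Rightarrow> bool" where
  "is_free_product G I H \<longleftrightarrow>
     group G \<and> (\<forall>i\<in>I. subgroup (H i) G) \<and>
     (\<forall>g\<in>carrier G. \<exists>!ws. reduced_word G I H ws \<and> word_prod G ws = g)"

definition freely_indecomposable :: "'a monoid \<Rightarrow> bool" where
  "freely_indecomposable G \<longleftrightarrow>
     group G \<and> carrier G \<noteq> {\<one>\<^bsub>G\<^esub>} \<and>
     \<not> (\<exists>A B. A \<noteq> {\<one>\<^bsub>G\<^esub>} \<and> B \<noteq> {\<one>\<^bsub>G\<^esub>} \<and>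
             is_free_product G {0, 1} (\<lambda>i. if i = 0 then A else B))"

definition infinite_cyclic_gen :: "'a monoid \<Rightarrow> 'a \<Rightarrow> bool" where
  "infinite_cyclic_gen G v \<longleftrightarrow> v \<in> carrier G \<and> carrier G = generate G {v} \<and> infinite (carrier G)"

definition factor_auts :: "'a monoid \<Rightarrow> nat set \<Rightarrow> (nat \<Rightarrow> 'a set) \<Rightarrow> ('a \<Rightarrow> 'a) set" where
  "factor_auts G I H = {\<phi> \<in> auto G. \<exists>i\<in>I. \<phi> ` H i = H i \<and>
      (\<forall>j\<in>I - {i}. \<forall>x\<in>H j. \<phi> x = x)}"

definition transvections :: "'a monoid \<Rightarrow> nat set \<Rightarrow> (nat \<Rightarrow> 'a set) \<Rightarrow> ('a \<Rightarrow> 'a) set" where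
  "transvections G I H = {\<phi> \<in> auto G. \<exists>i\<in>I. \<exists>j\<in>I. j \<noteq> i \<and>
      (\<exists>v w. infinite_cyclic_gen (G\<lparr>carrier := H i\<rparr>) v \<and> w \<in> H j \<and>
             (\<phi> v = v \<otimes>\<^bsub>G\<^esub> w \<or> \<phi> v = w \<otimes>\<^bsub>G\<^esub> v)) \<and>
      (\<forall>m\<in>I - {i}. \<forall>x\<in>H m. \<phi> x = x)}"

definition partial_conjugations :: "'a monoid \<Rightarrow> nat set \<Rightarrow> (nat \<Rightarrow> 'a set) \<Rightarrow> ('a \<Rightarrow> 'a) set" where
  "partial_conjugations G I H = {\<phi> \<in> auto G. \<exists>i\<in>I. \<exists>j\<in>I. j \<noteq> i \<and>
      (\<exists>g\<in>H j. \<forall>x\<in>H i. \<phi> x = inv\<^bsub>G\<^esub> g \<otimes>\<^bsub>G\<^esub> x \<otimes>\<^bsub>G\<^esub> g) \<and>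
      (\<forall>m\<in>I - {i}. \<forall>x\<in>H m. \<phi> x = x)}"

definition Aut0 :: "'a monoid \<Rightarrow> nat set \<Rightarrow> (nat \<Rightarrow> 'a set) \<Rightarrow> ('a \<Rightarrow> 'a) set" where
  "Aut0 G I H = generate (AutoGroup G)
      (factor_auts G I H \<union> transvections G I H \<union> partial_conjugations G I H)"

end

theory Submission
  imports Defs
begin

lemma AutoGroup_carrier: "carrier (AutoGroup G) = auto G"
  by (simp add: AutoGroup_def BijGroup_def)

lemma AutoGroup_mult_app:
  assumes "f \<in> auto G" "g \<in> auto G" "x \<in> carrier G"
  shows "(f \<otimes>\<^bsub>AutoGroup G\<^esub> g) x = f (g x)"
  using assms by (auto simp add: AutoGroup_def BijGroup_def auto_def compose_def)

lemma AutoGroup_one_app: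
  assumes "x \<in> carrier G"
  shows "\<one>\<^bsub>AutoGroup G\<^esub> x = x"
  using assms by (auto simp add: AutoGroup_def BijGroup_def)

locale L = group G for G :: "'a monoid" (structure) +
  fixes H :: "nat \<Rightarrow> 'a set" and k :: nat and p :: "'a \<Rightarrow> 'a"
  assumes sub: "\<And>i. i \<in> {1..k} \<Longrightarrow> subgroup (H i) G"
    and words: "\<And>g. g \<in> carrier G \<Longrightarrow> \<exists>ws. (\<forall>(i, x) \<in> set ws. i \<in> {1..k} \<and> x \<in> H i) \<and> foldr (\<lambda>(i, x) acc. x \<otimes> acc) ws \<one> = g"
    and k3: "k \<ge> 3"
    and pcarr0: "\<And>x. x \<in> carrier G \<Longrightarrow> p x \<in> carrier G"
    and pmult0: "\<And>x y. x \<in> carrier G \<Longrightarrow> y \<in> carrier G \<Longrightarrow> p (x \<otimes> y) = p x \<otimes> p y"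
    and pid: "\<And>x. x \<in> H 1 \<union> H 2 \<Longrightarrow> p x = x"
    and ptriv: "\<And>i x. i \<in> {3..k} \<Longrightarrow> x \<in> H i \<Longrightarrow> p x = \<one>"
begin

lemma Hcarr: "i \<in> {1..k} \<Longrightarrow> H i \<subseteq> carrier G"
  using sub subgroup.subset by blast

lemma H12carr: "H 1 \<union> H 2 \<subseteq> carrier G"
  using Hcarr k3 by auto

lemma p_carr: "x \<in> carrier G \<Longrightarrow> p x \<in> carrier G"
  by (rule pcarr0)

lemma p_mult: "x \<in> carrier G \<Longrightarrow> y \<in> carrier G \<Longrightarrow> p (x \<otimes> y) = p x \<otimes> p y"
  by (rule pmult0)

lemma p_one: "p \<one> = \<one>"
  using pid sub[of 1] k3 subgroup.one_closed by fastforce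

lemma p_inv: assumes "x \<in> carrier G" shows "p (inv x) = inv (p x)"
proof -
  have "p (inv x) \<otimes> p x = \<one>" using assms p_mult[of "inv x" x] p_one by simp
  thus ?thesis using assms p_carr by (simp add: inv_char group.inv_equality)
qed

lemma p_gen: "x \<in> generate G (H 1 \<union> H 2) \<Longrightarrow> p x = x"
proof (induction rule: generate.induct)
  case one then show ?case by (rule p_one)
next
  case (incl h) then show ?case by (rule pid)
next
  case (inv h) then show ?case using p_inv pid H12carr by auto
next
  case (eng h1 h2)
  have "h1 \<in> carrier G" "h2 \<in> carrier G" using eng.hyps generate_incl[OF H12carr] by auto
  then show ?case using p_mult eng.IH by simp
qed

lemma agree_gen:
  assumes S: "S \<subseteq> carrier G"
    and fc: "\<And>x. x \<in> carrier G \<Longrightarrow> f x \<in> carrier G"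
    and hc: "\<And>x. x \<in> carrier G \<Longrightarrow> h x \<in> carrier G"
    and fm: "\<And>x y. x \<in> carrier G \<Longrightarrow> y \<in> carrier G \<Longrightarrow> f (x \<otimes> y) = f x \<otimes> f y"
    and hm: "\<And>x y. x \<in> carrier G \<Longrightarrow> y \<in> carrier G \<Longrightarrow> h (x \<otimes> y) = h x \<otimes> h y"
    and f1: "f \<one> = \<one>" and h1: "h \<one> = \<one>"
    and ag: "\<And>x. x \<in> S \<Longrightarrow> f x = h x"
    and x: "x \<in> generate G S"
  shows "f x = h x"
  using x
proof (induction rule: generate.induct)
  case one then show ?case using f1 h1 by simp
next
  case (incl g) then show ?case by (rule ag)
next
  case (inv g)
  have g: "g \<in> carrier G" using inv S by auto
  have "f (inv g) \<otimes> f g = \<one>" using fm[of "inv g" g] g f1 by simp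
  hence a: "f (inv g) = inv (f g)" using g fc by (simp add: inv_equality)
  have "h (inv g) \<otimes> h g = \<one>" using hm[of "inv g" g] g h1 by simp
  hence b: "h (inv g) = inv (h g)" using g hc by (simp add: inv_equality)
  show ?case using a b ag inv by simp
next
  case (eng h1 h2)
  have "h1 \<in> carrier G" "h2 \<in> carrier G" using eng.hyps generate_incl[OF S] by auto
  then show ?case using fm hm eng.IH by simp
qed

lemma agree_words:
  assumes fm: "\<And>x y. x \<in> carrier G \<Longrightarrow> y \<in> carrier G \<Longrightarrow> f (x \<otimes> y) = f x \<otimes> f y"
    and hm: "\<And>x y. x \<in> carrier G \<Longrightarrow> y \<in> carrier G \<Longrightarrow> h (x \<otimes> y) = h x \<otimes> h y"
    and f1: "f \<one> = h \<one>"
    and ag: "\<And>i x. i \<in> {1..k} \<Longrightarrow> x \<in> H i \<Longrightarrow> f x = h x"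
    and g: "g \<in> carrier G"
  shows "f g = h g"
proof -
  have *: "(\<forall>(i, x) \<in> set ws. i \<in> {1..k} \<and> x \<in> H i) \<Longrightarrow>
      foldr (\<lambda>(i, x) acc. x \<otimes> acc) ws \<one> \<in> carrier G \<and> f (foldr (\<lambda>(i, x) acc. x \<otimes> acc) ws \<one>) = h (foldr (\<lambda>(i, x) acc. x \<otimes> acc) ws \<one>)" for ws
  proof (induction ws)
    case Nil then show ?case using f1 by simp
  next
    case (Cons a ws)
    obtain i x where a: "a = (i, x)" by force
    have ix: "i \<in> {1..k}" "x \<in> H i" using Cons.prems a by auto
    have xc: "x \<in> carrier G" using ix Hcarr by auto
    have e: "foldr (\<lambda>(i, x) acc. x \<otimes> acc) (a # ws) \<one> = x \<otimes> foldr (\<lambda>(i, x) acc. x \<otimes> acc) ws \<one>" by (simp add: a)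
    have IH: "foldr (\<lambda>(i, x) acc. x \<otimes> acc) ws \<one> \<in> carrier G" "f (foldr (\<lambda>(i, x) acc. x \<otimes> acc) ws \<one>) = h (foldr (\<lambda>(i, x) acc. x \<otimes> acc) ws \<one>)"
      using Cons by auto
    show ?case using e IH xc fm hm ag[OF ix] by simp
  qed
  obtain ws where "(\<forall>(i, x) \<in> set ws. i \<in> {1..k} \<and> x \<in> H i)" "foldr (\<lambda>(i, x) acc. x \<otimes> acc) ws \<one> = g"
    using words g by auto
  then show ?thesis using *[of ws] by auto
qed

definition Q :: "('a \<Rightarrow> 'a) \<Rightarrow> bool" where
  "Q \<phi> \<longleftrightarrow> (\<forall>x\<in>carrier G. p (\<phi> x) = \<one> \<longleftrightarrow> p x = \<one>)"

lemma auto_facts: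
  assumes "\<phi> \<in> auto G"
  shows "\<And>x. x \<in> carrier G \<Longrightarrow> \<phi> x \<in> carrier G"
    and "\<And>x y. x \<in> carrier G \<Longrightarrow> y \<in> carrier G \<Longrightarrow> \<phi> (x \<otimes> y) = \<phi> x \<otimes> \<phi> y"
    and "\<phi> \<one> = \<one>"
    and "bij_betw \<phi> (carrier G) (carrier G)"
proof -
  have h: "\<phi> \<in> hom G G" using assms by (simp add: auto_def)
  show "\<And>x. x \<in> carrier G \<Longrightarrow> \<phi> x \<in> carrier G" using h by (auto simp: hom_def)
  show "\<And>x y. x \<in> carrier G \<Longrightarrow> y \<in> carrier G \<Longrightarrow> \<phi> (x \<otimes> y) = \<phi> x \<otimes> \<phi> y"
    using h by (auto simp: hom_def)
  show "\<phi> \<one> = \<one>" using h hom_one[OF h] by (simp add: is_group)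
  show "bij_betw \<phi> (carrier G) (carrier G)" using assms by (simp add: auto_def Bij_def)
qed

lemma case1:
  assumes a: "\<phi> \<in> auto G"
    and ag: "\<And>i x. i \<in> {1..k} \<Longrightarrow> x \<in> H i \<Longrightarrow> p (\<phi> x) = p x"
  shows "Q \<phi>"
proof -
  note af = auto_facts[OF a]
  have "\<forall>x\<in>carrier G. p (\<phi> x) = p x"
    using agree_words[of "\<lambda>x. p (\<phi> x)" p] af p_mult p_one ag by auto
  then show ?thesis by (simp add: Q_def)
qed

lemma case2:
  assumes a: "\<phi> \<in> auto G"
    and ag: "\<And>i x. i \<in> {1..k} \<Longrightarrow> x \<in> H i \<Longrightarrow> p (\<phi> x) = \<phi> (p x)"
  shows "Q \<phi>"
proof -
  note af = auto_facts[OF a]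
  have e: "\<forall>x\<in>carrier G. p (\<phi> x) = \<phi> (p x)"
    using agree_words[of "\<lambda>x. p (\<phi> x)" "\<lambda>x. \<phi> (p x)"] af p_mult p_one ag p_carr by auto
  have "p (\<phi> x) = \<one> \<longleftrightarrow> p x = \<one>" if x: "x \<in> carrier G" for x
  proof -
    have "\<phi> (p x) = \<phi> \<one> \<longleftrightarrow> p x = \<one>"
      using af(4) p_carr[OF x] by (auto simp: bij_betw_def inj_on_def)
    then show ?thesis using e x af(3) by simp
  qed
  then show ?thesis by (simp add: Q_def)
qed


lemma other_ok:
  assumes a: "\<phi> \<in> auto G" and i: "i \<in> {1,2}" and m: "m \<in> {1..k}" "m \<noteq> i"
    and x: "x \<in> H m" and fx: "\<phi> x = x"
  shows "p (\<phi> x) = \<phi> (p x)"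
proof (cases "m \<le> 2")
  case True
  then have "m = 1 \<or> m = 2" using m by auto
  then have "p x = x" using pid x by auto
  then show ?thesis using fx by simp
next
  case False
  then have "m \<in> {3..k}" using m by auto
  then have "p x = \<one>" using ptriv x by auto
  then show ?thesis using fx auto_facts(3)[OF a] by simp
qed

lemma fa_Q:
  assumes "\<phi> \<in> factor_auts G {1..k} H"
  shows "Q \<phi>"
proof -
  obtain i where a: "\<phi> \<in> auto G" and i: "i \<in> {1..k}" and im: "\<phi> ` H i = H i"
    and oth: "\<And>j x. j \<in> {1..k} - {i} \<Longrightarrow> x \<in> H j \<Longrightarrow> \<phi> x = x"
    using assms by (auto simp: factor_auts_def)
  show ?thesis
  proof (cases "i \<ge> 3")
    case True
    show ?thesis
    proof (rule case1[OF a])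
      fix m x assume m: "m \<in> {1..k}" and x: "x \<in> H m"
      show "p (\<phi> x) = p x"
      proof (cases "m = i")
        case True
        then have "\<phi> x \<in> H i" using im x by blast
        moreover have "i \<in> {3..k}" using i \<open>i \<ge> 3\<close> by auto
        ultimately show ?thesis using ptriv x True by auto
      next
        case False then show ?thesis using oth m x by auto
      qed
    qed
  next
    case False
    then have i12: "i \<in> {1,2}" using i by auto
    show ?thesis
    proof (rule case2[OF a])
      fix m x assume m: "m \<in> {1..k}" and x: "x \<in> H m"
      show "p (\<phi> x) = \<phi> (p x)"
      proof (cases "m = i")
        case True
        then have "\<phi> x \<in> H i" using im x by blast
        then have "p (\<phi> x) = \<phi> x" using pid i12 by auto
        moreover have "p x = x" using pid i12 x True by auto
        ultimately show ?thesis by simp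
      next
        case False then show ?thesis using oth m x other_ok[OF a i12 m] by auto
      qed
    qed
  qed
qed

lemma tv_Q:
  assumes "\<phi> \<in> transvections G {1..k} H"
    and nc: "\<forall>i\<in>{3..k}. \<not> (\<exists>v. infinite_cyclic_gen (G\<lparr>carrier := H i\<rparr>) v)"
  shows "Q \<phi>"
proof -
  obtain i j v w where a: "\<phi> \<in> auto G" and i: "i \<in> {1..k}" and j: "j \<in> {1..k}" "j \<noteq> i"
    and icg: "infinite_cyclic_gen (G\<lparr>carrier := H i\<rparr>) v" and w: "w \<in> H j"
    and fv: "\<phi> v = v \<otimes> w \<or> \<phi> v = w \<otimes> v"
    and oth: "\<And>m x. m \<in> {1..k} - {i} \<Longrightarrow> x \<in> H m \<Longrightarrow> \<phi> x = x"
    using assms(1) by (auto simp: transvections_def)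
  have i12: "i \<in> {1,2}" using i nc icg by force
  have v: "v \<in> H i" using icg by (simp add: infinite_cyclic_gen_def)
  have Hi: "H i = generate G {v}"
    using icg generate_consistent[of "{v}" "H i"] v sub[OF i] by (simp add: infinite_cyclic_gen_def)
  have vc: "v \<in> carrier G" and wc: "w \<in> carrier G" using v w Hcarr i j by auto
  note af = auto_facts[OF a]
  have vS: "{v} \<subseteq> carrier G" using vc by auto
  show ?thesis
  proof (cases "j \<ge> 3")
    case True
    have pw: "p w = \<one>" using ptriv w True j by auto
    show ?thesis
    proof (rule case1[OF a])
      fix m x assume m: "m \<in> {1..k}" and x: "x \<in> H m"
      show "p (\<phi> x) = p x"
      proof (cases "m = i")
        case True
        have "p (\<phi> v) = p v" using fv p_mult vc wc pw p_carr by auto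
        then show ?thesis
          using agree_gen[OF vS, of "\<lambda>x. p (\<phi> x)" p x] x True Hi af p_carr p_mult p_one by auto
      next
        case False then show ?thesis using oth m x by auto
      qed
    qed
  next
    case False
    then have j12: "j \<in> {1,2}" using j by auto
    show ?thesis
    proof (rule case2[OF a])
      fix m x assume m: "m \<in> {1..k}" and x: "x \<in> H m"
      show "p (\<phi> x) = \<phi> (p x)"
      proof (cases "m = i")
        case True
        have g1: "v \<in> generate G (H 1 \<union> H 2)" "w \<in> generate G (H 1 \<union> H 2)"
        proof -
          have "v \<in> H 1 \<union> H 2" "w \<in> H 1 \<union> H 2" using v w i12 j12 by auto
          then show "v \<in> generate G (H 1 \<union> H 2)" "w \<in> generate G (H 1 \<union> H 2)"
            by (auto intro: generate.incl)
        qed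
        have "\<phi> v \<in> generate G (H 1 \<union> H 2)" using fv g1 generate.eng by metis
        then have "p (\<phi> v) = \<phi> (p v)" using p_gen g1 by simp
        then show ?thesis
          using agree_gen[OF vS, of "\<lambda>x. p (\<phi> x)" "\<lambda>x. \<phi> (p x)" x] x True Hi af p_carr p_mult p_one
          by auto
      next
        case False then show ?thesis using oth m x other_ok[OF a i12 m] by auto
      qed
    qed
  qed
qed

lemma pc_Q:
  assumes "\<phi> \<in> partial_conjugations G {1..k} H"
  shows "Q \<phi>"
proof -
  obtain i j g where a: "\<phi> \<in> auto G" and i: "i \<in> {1..k}" and j: "j \<in> {1..k}" "j \<noteq> i"
    and g: "g \<in> H j" and fx: "\<And>x. x \<in> H i \<Longrightarrow> \<phi> x = inv g \<otimes> x \<otimes> g"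
    and oth: "\<And>m x. m \<in> {1..k} - {i} \<Longrightarrow> x \<in> H m \<Longrightarrow> \<phi> x = x"
    using assms(1) by (auto simp: partial_conjugations_def)
  have gc: "g \<in> carrier G" using g Hcarr j by auto
  have pc: "x \<in> H i \<Longrightarrow> p (\<phi> x) = inv (p g) \<otimes> p x \<otimes> p g" for x
  proof -
    assume x: "x \<in> H i"
    have xc: "x \<in> carrier G" using x Hcarr i by auto
    show ?thesis using fx[OF x] p_mult p_inv gc xc by simp
  qed
  show ?thesis
  proof (cases "i \<ge> 3 \<or> j \<ge> 3")
    case True
    show ?thesis
    proof (rule case1[OF a])
      fix m x assume m: "m \<in> {1..k}" and x: "x \<in> H m"
      show "p (\<phi> x) = p x"
      proof (cases "m = i")
        case mi: True
        have xc: "x \<in> carrier G" using x Hcarr m by auto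
        show ?thesis
        proof (cases "i \<ge> 3")
          case True
          then have "p x = \<one>" using ptriv x mi i by auto
          then show ?thesis using pc x mi p_carr gc by simp
        next
          case False
          then have "p g = \<one>" using \<open>i \<ge> 3 \<or> j \<ge> 3\<close> ptriv g j by auto
          then show ?thesis using pc x mi p_carr xc by simp
        qed
      next
        case False then show ?thesis using oth m x by auto
      qed
    qed
  next
    case False
    then have i12: "i \<in> {1,2}" and j12: "j \<in> {1,2}" using i j by auto
    show ?thesis
    proof (rule case2[OF a])
      fix m x assume m: "m \<in> {1..k}" and x: "x \<in> H m"
      show "p (\<phi> x) = \<phi> (p x)"
      proof (cases "m = i")
        case True
        have g1: "x \<in> generate G (H 1 \<union> H 2)" "g \<in> generate G (H 1 \<union> H 2)"
            "inv g \<in> generate G (H 1 \<union> H 2)"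
        proof -
          have "x \<in> H 1 \<union> H 2" "g \<in> H 1 \<union> H 2" using x True g i12 j12 by auto
          then show "x \<in> generate G (H 1 \<union> H 2)" "g \<in> generate G (H 1 \<union> H 2)"
            "inv g \<in> generate G (H 1 \<union> H 2)" by (auto intro: generate.incl generate.inv)
        qed
        have "\<phi> x \<in> generate G (H 1 \<union> H 2)" using fx x True g1 generate.eng by metis
        then show ?thesis using p_gen g1 by simp
      next
        case False then show ?thesis using oth m x other_ok[OF a i12 m] by auto
      qed
    qed
  qed
qed

lemma Aut0_Q:
  assumes nc: "\<forall>i\<in>{3..k}. \<not> (\<exists>v. infinite_cyclic_gen (G\<lparr>carrier := H i\<rparr>) v)"
    and f: "\<phi> \<in> Aut0 G {1..k} H"
  shows "\<phi> \<in> auto G \<and> Q \<phi>"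
proof -
  let ?A = "AutoGroup G"
  let ?S = "{f \<in> auto G. Q f}"
  have gA: "group ?A" by (rule AutoGroup)
  have sg: "subgroup ?S ?A"
  proof (rule subgroup.intro)
    show "?S \<subseteq> carrier ?A" by (auto simp: AutoGroup_carrier)
  next
    fix f g assume f: "f \<in> ?S" and g: "g \<in> ?S"
    have "f \<otimes>\<^bsub>?A\<^esub> g \<in> auto G"
      using f g group.subgroup_self[OF gA] subgroup.m_closed[of "carrier ?A" ?A]
      by (simp add: AutoGroup_carrier)
    moreover have "Q (f \<otimes>\<^bsub>?A\<^esub> g)"
      unfolding Q_def
    proof
      fix x assume x: "x \<in> carrier G"
      have "g x \<in> carrier G" using auto_facts(1) g x by auto
      then show "p ((f \<otimes>\<^bsub>?A\<^esub> g) x) = \<one> \<longleftrightarrow> p x = \<one>"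
        using AutoGroup_mult_app[of f G g x] f g x by (auto simp: Q_def)
    qed
    ultimately show "f \<otimes>\<^bsub>?A\<^esub> g \<in> ?S" by simp
  next
    have "\<one>\<^bsub>?A\<^esub> \<in> auto G" using group.subgroup_self[OF gA] subgroup.one_closed
      by (metis AutoGroup_carrier)
    moreover have "Q \<one>\<^bsub>?A\<^esub>" by (simp add: Q_def AutoGroup_one_app)
    ultimately show "\<one>\<^bsub>?A\<^esub> \<in> ?S" by simp
  next
    fix f assume f: "f \<in> ?S"
    have fc: "f \<in> carrier ?A" using f by (simp add: AutoGroup_carrier)
    have ic: "inv\<^bsub>?A\<^esub> f \<in> auto G" using group.inv_closed[OF gA fc] by (simp add: AutoGroup_carrier)
    have eq1: "inv\<^bsub>?A\<^esub> f \<otimes>\<^bsub>?A\<^esub> f = \<one>\<^bsub>?A\<^esub>" by (rule group.l_inv[OF gA fc])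
    have bk: "(inv\<^bsub>?A\<^esub> f) (f x) = x" if x: "x \<in> carrier G" for x
    proof -
      have "(inv\<^bsub>?A\<^esub> f \<otimes>\<^bsub>?A\<^esub> f) x = x" using eq1 AutoGroup_one_app x by metis
      then show ?thesis using AutoGroup_mult_app[OF ic _ x, of f] f by simp
    qed
    have "Q (inv\<^bsub>?A\<^esub> f)" unfolding Q_def
    proof
      fix y assume y: "y \<in> carrier G"
      obtain x where x: "x \<in> carrier G" "y = f x"
        using auto_facts(4)[of f] f y by (auto simp: bij_betw_def)
      show "p ((inv\<^bsub>?A\<^esub> f) y) = \<one> \<longleftrightarrow> p y = \<one>"
        using bk[OF x(1)] x f by (auto simp: Q_def)
    qed
    then show "inv\<^bsub>?A\<^esub> f \<in> ?S" using ic by simp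
  qed
  have gens: "factor_auts G {1..k} H \<union> transvections G {1..k} H \<union> partial_conjugations G {1..k} H \<subseteq> ?S"
  proof
    fix f assume f: "f \<in> factor_auts G {1..k} H \<union> transvections G {1..k} H \<union> partial_conjugations G {1..k} H"
    then have "f \<in> auto G" by (auto simp: factor_auts_def transvections_def partial_conjugations_def)
    moreover have "Q f" using f fa_Q tv_Q[OF _ nc] pc_Q by blast
    ultimately show "f \<in> ?S" by simp
  qed
  show ?thesis using group.generate_subgroup_incl[OF gA gens sg] f by (auto simp: Aut0_def)
qed

end

theorem lemma5p2:
  fixes G :: "'a monoid" and H :: "nat \<Rightarrow> 'a set" and k :: nat
    and p :: "'a \<Rightarrow> 'a" and \<phi> :: "'a \<Rightarrow> 'a"
  assumes "k \<ge> 3"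
    and "is_free_product G {1..k} H"
    and "\<forall>i\<in>{1..k}. freely_indecomposable (G\<lparr>carrier := H i\<rparr>)"
    and "\<forall>i\<in>{3..k}. \<not> (\<exists>v. infinite_cyclic_gen (G\<lparr>carrier := H i\<rparr>) v)"
    and "p \<in> hom G (G\<lparr>carrier := generate G (H 1 \<union> H 2)\<rparr>)"
    and "\<forall>x\<in>H 1 \<union> H 2. p x = x"
    and "\<forall>i\<in>{3..k}. \<forall>x\<in>H i. p x = \<one>\<^bsub>G\<^esub>"
    and "\<phi> \<in> Aut0 G {1..k} H"
  shows "\<phi> ` kernel G G p = kernel G G p"
proof -
  have gG: "group G" and sub: "\<And>i. i \<in> {1..k} \<Longrightarrow> subgroup (H i) G"
    and w: "\<And>g. g \<in> carrier G \<Longrightarrow> \<exists>ws. reduced_word G {1..k} H ws \<and> word_prod G ws = g"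
    using assms(2) unfolding is_free_product_def by blast+
  have H12: "H 1 \<union> H 2 \<subseteq> carrier G" using sub[of 1] sub[of 2] assms(1) subgroup.subset by force
  have gsub: "generate G (H 1 \<union> H 2) \<subseteq> carrier G" using group.generate_incl[OF gG H12] .
  have LA: "L_axioms G H k p"
  proof (unfold L_axioms_def, intro conjI allI impI)
    show "\<And>i. i \<in> {1..k} \<Longrightarrow> subgroup (H i) G" by (rule sub)
    show "\<And>g. g \<in> carrier G \<Longrightarrow> \<exists>ws. (\<forall>(i, x) \<in> set ws. i \<in> {1..k} \<and> x \<in> H i) \<and>
        foldr (\<lambda>(i, x) acc. x \<otimes>\<^bsub>G\<^esub> acc) ws \<one>\<^bsub>G\<^esub> = g"
      using w unfolding reduced_word_def word_prod_def by fast
    show "k \<ge> 3" by (rule assms(1))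
    show "\<And>x. x \<in> carrier G \<Longrightarrow> p x \<in> carrier G" using assms(5) gsub by (auto simp: hom_def)
    show "\<And>x y. x \<in> carrier G \<Longrightarrow> y \<in> carrier G \<Longrightarrow> p (x \<otimes>\<^bsub>G\<^esub> y) = p x \<otimes>\<^bsub>G\<^esub> p y"
      using assms(5) by (auto simp: hom_def)
    show "\<And>x. x \<in> H 1 \<union> H 2 \<Longrightarrow> p x = x" using assms(6) by blast
    show "\<And>i x. i \<in> {3..k} \<Longrightarrow> x \<in> H i \<Longrightarrow> p x = \<one>\<^bsub>G\<^esub>" using assms(7) by blast
  qed
  interpret L G H k p by (rule L.intro[OF gG LA])
  have A: "\<phi> \<in> auto G" and Qf: "Q \<phi>" using Aut0_Q[OF assms(4,8)] by auto
  have bij: "bij_betw \<phi> (carrier G) (carrier G)" using auto_facts(4)[OF A] .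
  show ?thesis
  proof
    show "\<phi> ` kernel G G p \<subseteq> kernel G G p"
      using Qf bij by (auto simp: kernel_def Q_def bij_betw_def)
  next
    show "kernel G G p \<subseteq> \<phi> ` kernel G G p"
    proof
      fix y assume y: "y \<in> kernel G G p"
      then have yc: "y \<in> carrier G" and py: "p y = \<one>\<^bsub>G\<^esub>" by (auto simp: kernel_def)
      obtain x where x: "x \<in> carrier G" "y = \<phi> x" using bij yc by (auto simp: bij_betw_def)
      then have "x \<in> kernel G G p" using Qf py by (auto simp: kernel_def Q_def)
      then show "y \<in> \<phi> ` kernel G G p" using x by blast
    qed
  qed
qed

end
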